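(* There is a continuous function $\mathcal{G}:\mathrm{PrTr}_2\to\mathbf{K}$ such that for every $T\in\mathrm{PrTr}_2$, $\mathcal{G}(T)$ is the closed offspring of $T$ determined by some compliant family $(D_t)_{t\in T}$, and for every $x\in[T]$: if $x\in\mathcal{N}$ then $\mathcal{O}_{\mathcal{G}(T)}(\overline{x})=1$, and if $x\notin\mathcal{N}$ then $\mathcal{D}_{\mathcal{G}(T)}(\overline{x})\in\{0,1\}$.
   Context: $2^{\omega}$ is the Cantor space; $N_s=\{x\in2^\omega:s\subset x\}$; $\mu$ is the coin-tossing measure, $\mu(N_s)=2^{-\mathrm{lh}(s)}$. For measurable $A$, $\mathcal{D}_A(z)=\lim_n\mu(A\cap N_{z\restriction n})/\mu(N_{z\restriction n})$ when it exists, and $\mathcal{O}_A(z)$ is the limsup minus the liminf of those ratios. $A$ is dualistic if $\mathcal{D}_A(z)$ exists and lies in $\{0,1\}$ for all $z$. $\mathcal{N}=\{y\in2^\omega:y(n)=1\text{ for infinitely many }n\}$. $\mathrm{PrTr}_2$ is the Polish space of pruned trees on $\{0,1\}$ (nonempty, closed under initial segments, every node has a proper extension), as a subspace of $2^{(2^{<\omega})}$; $[T]$ is the set of branches. $\mathbf{K}$ is the space of compact subsets of $2^\omega$ with the Vietoris topology. Stretch: $\overline{s}=s(0)^{(1)}{}^\frown s(1)^{(2)}{}^\frown s(2)^{(3)}\cdots$ ($s(j)$ repeated $j+1$ times). $\mathrm{Fl}(n)=2^{n+1}\setminus\{0^{(n+1)},1^{(n+1)}\}$. A family $(D_t)_{t\in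 T}$ is compliant if each $D_t$ is dualistic, $\emptyset\neq D_t\neq2^\omega$, and $\mu(\operatorname{Int}D_t)=\mu(\operatorname{Cl}D_t)$; its closed offspring is $\{\overline{x}:x\in[T]\}\cup\bigcup\{\overline{t}^\frown a^\frown\operatorname{Cl}D_t:t\in T,\ a\in\mathrm{Fl}(\mathrm{lh}\,t)\}$. *)

theory Defs
  imports "HOL-Probability.Probability"
begin

definition cantor_top :: "(nat \<Rightarrow> bool) topology" where
  "cantor_top = product_topology (\<lambda>_. discrete_topology (UNIV :: bool set)) UNIV"

definition restr :: "(nat \<Rightarrow> bool) \<Rightarrow> nat \<Rightarrow> bool list" where
  "restr z n = map z [0..<n]"

definition cyl :: "bool list \<Rightarrow> (nat \<Rightarrow> bool) set" where
  "cyl s = {x. restr x (length s) = s}"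

definition cantor_M :: "(nat \<Rightarrow> bool) measure" where
  "cantor_M = PiM UNIV (\<lambda>_. measure_pmf (bernoulli_pmf (1/2)))"

definition mu :: "(nat \<Rightarrow> bool) set \<Rightarrow> real" where
  "mu A = measure cantor_M A"

definition dens_ratio :: "(nat \<Rightarrow> bool) set \<Rightarrow> (nat \<Rightarrow> bool) \<Rightarrow> nat \<Rightarrow> real" where
  "dens_ratio A z n = mu (A \<inter> cyl (restr z n)) / mu (cyl (restr z n))"

definition density_is :: "(nat \<Rightarrow> bool) set \<Rightarrow> (nat \<Rightarrow> bool) \<Rightarrow> real \<Rightarrow> bool" where
  "density_is A z d \<longleftrightarrow> dens_ratio A z \<longlonglongrightarrow> d"

definition osc :: "(nat \<Rightarrow> bool) set \<Rightarrow> (nat \<Rightarrow> bool) \<Rightarrow> ereal" where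
  "osc A z = limsup (\<lambda>n. ereal (dens_ratio A z n)) - liminf (\<lambda>n. ereal (dens_ratio A z n))"

definition dualistic :: "(nat \<Rightarrow> bool) set \<Rightarrow> bool" where
  "dualistic A \<longleftrightarrow> A \<in> sets cantor_M \<and> (\<forall>z. \<exists>d\<in>{0,1}. density_is A z d)"

definition NN :: "(nat \<Rightarrow> bool) set" where
  "NN = {y. infinite {n. y n}}"

text \<open>2^(2^<omega): characteristic functions of sets of finite binary sequences,
  with the product topology.  A tree T is identified with its node set {s. T s}.\<close>

definition tree_space_top :: "(bool list \<Rightarrow> bool) topology" where
  "tree_space_top = product_topology (\<lambda>_. discrete_topology (UNIV :: bool set)) UNIV"

definition pruned_tree :: "(bool list \<Rightarrow> bool) \<Rightarrow> bool" where
  "pruned_tree T \<longleftrightarrow> (\<exists>s. T s)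
     \<and> (\<forall>s n. T s \<longrightarrow> T (take n s))
     \<and> (\<forall>s. T s \<longrightarrow> (\<exists>u. T u \<and> strict_prefix s u))"

definition PrTr2 :: "(bool list \<Rightarrow> bool) topology" where
  "PrTr2 = subtopology tree_space_top {T. pruned_tree T}"

definition branches :: "(bool list \<Rightarrow> bool) \<Rightarrow> (nat \<Rightarrow> bool) set" where
  "branches T = {x. \<forall>n. T (restr x n)}"

definition vietoris :: "(nat \<Rightarrow> bool) set topology" where
  "vietoris = subtopology
     (topology_generated_by
        ({{K. K \<subseteq> U} | U. openin cantor_top U} \<union> {{K. K \<inter> U \<noteq> {}} | U. openin cantor_top U}))
     {K. compactin cantor_top K}"

definition stretch_list :: "bool list \<Rightarrow> bool list" where
  "stretch_list s = concat (map (\<lambda>j. replicate (j + 1) (s ! j)) [0..<length s])"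

text \<open>index j of the block containing position k (block j has length j+1)\<close>
definition block_of :: "nat \<Rightarrow> nat" where
  "block_of k = (LEAST j. k < (j + 1) * (j + 2) div 2)"

definition stretch :: "(nat \<Rightarrow> bool) \<Rightarrow> (nat \<Rightarrow> bool)" where
  "stretch x = (\<lambda>k. x (block_of k))"

definition Fl :: "nat \<Rightarrow> bool list set" where
  "Fl n = {a. length a = n + 1} - {replicate (n + 1) False, replicate (n + 1) True}"

definition lconc :: "bool list \<Rightarrow> (nat \<Rightarrow> bool) \<Rightarrow> (nat \<Rightarrow> bool)" where
  "lconc u x = (\<lambda>i. if i < length u then u ! i else x (i - length u))"

definition compliant :: "(bool list \<Rightarrow> bool) \<Rightarrow> (bool list \<Rightarrow> (nat \<Rightarrow> bool) set) \<Rightarrow> bool" where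
  "compliant T D \<longleftrightarrow> (\<forall>t. T t \<longrightarrow>
      dualistic (D t) \<and> D t \<noteq> {} \<and> D t \<noteq> UNIV
      \<and> mu (cantor_top interior_of (D t)) = mu (cantor_top closure_of (D t)))"

definition closed_offspring ::
  "(bool list \<Rightarrow> bool) \<Rightarrow> (bool list \<Rightarrow> (nat \<Rightarrow> bool) set) \<Rightarrow> (nat \<Rightarrow> bool) set" where
  "closed_offspring T D =
     stretch ` branches T \<union>
     (\<Union>{lconc (stretch_list t @ a) ` (cantor_top closure_of (D t)) | t a. T t \<and> a \<in> Fl (length t)})"

end

theory Submission
  imports Defs
begin


abbreviation "BM \<equiv> (\<lambda>_::nat. measure_pmf (bernoulli_pmf (1/2)))"

lemma prob_cantor: "prob_space cantor_M"
  unfolding cantor_M_def by (intro prob_space_PiM) (simp add: prob_space_measure_pmf)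

lemma space_cantor[simp]: "space cantor_M = UNIV"
  unfolding cantor_M_def by (simp add: space_PiM)
lemma restr_nth: "i < n \<Longrightarrow> restr y n ! i = y i"
  unfolding restr_def by simp
lemma length_restr[simp]: "length (restr y n) = n"
  unfolding restr_def by simp
lemma cyl_iff: "y \<in> cyl s \<longleftrightarrow> (\<forall>i<length s. y i = s ! i)"
proof -
  have "y \<in> cyl s \<longleftrightarrow> restr y (length s) = s" unfolding cyl_def by simp
  also have "\<dots> \<longleftrightarrow> (\<forall>i<length s. y i = s ! i)"
    by (simp add: list_eq_iff_nth_eq restr_nth)
  finally show ?thesis .
qed

lemma cyl_emb: "cyl s = prod_emb UNIV BM {..<length s} (PiE {..<length s} (\<lambda>i. {s!i}))"
proof (intro set_eqI)
  fix y
  show "y \<in> cyl s \<longleftrightarrow> y \<in> prod_emb UNIV BM {..<length s} (PiE {..<length s} (\<lambda>i. {s!i}))"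
    unfolding prod_emb_def cyl_iff by (simp add: PiE_iff Ball_def)
qed

lemma cyl_sets[measurable]: "cyl s \<in> sets cantor_M"
  unfolding cyl_emb cantor_M_def
  by (intro measurable_prod_emb sets_PiM_I_finite) auto

lemma emeasure_cyl: "emeasure cantor_M (cyl s) = ennreal ((1/2) ^ length s)"
proof -
  have "emeasure cantor_M (cyl s) = (\<Prod>i\<in>{..<length s}. emeasure (BM i) {s!i})"
    unfolding cyl_emb cantor_M_def
    by (rule emeasure_PiM_emb) (auto simp: prob_space_measure_pmf)
  also have "\<dots> = (\<Prod>i\<in>{..<length s}. ennreal (1/2))"
    by (intro prod.cong refl) (simp add: emeasure_pmf_single split: bool.splits)
  finally show ?thesis by (simp only: prod_constant card_lessThan ennreal_power)
qed

lemma mu_cyl: "mu (cyl s) = (1/2) ^ length s"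
  unfolding mu_def measure_def emeasure_cyl by simp

lemma topspace_cantor[simp]: "topspace cantor_top = UNIV"
  unfolding cantor_top_def by simp

lemma cyl_restr_iff: "z \<in> cyl (restr y n) \<longleftrightarrow> (\<forall>i<n. z i = y i)"
  by (simp add: cyl_iff restr_nth)

lemma openin_cantor_alt:
  "openin cantor_top U \<longleftrightarrow> (\<forall>x\<in>U. \<exists>V. finite {i. V i \<noteq> UNIV} \<and> x \<in> Pi\<^sub>E UNIV V \<and> Pi\<^sub>E UNIV V \<subseteq> U)"
  unfolding cantor_top_def openin_product_topology_alt
  by (simp only: topspace_discrete_topology openin_discrete_topology subset_UNIV simp_thms ball_UNIV UNIV_I)

lemma openin_cantor_iff:
  "openin cantor_top U \<longleftrightarrow> (\<forall>y\<in>U. \<exists>n. cyl (restr y n) \<subseteq> U)"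
proof
  assume "openin cantor_top U"
  then have H: "\<forall>x\<in>U. \<exists>V. finite {i. V i \<noteq> UNIV} \<and> x \<in> Pi\<^sub>E UNIV V \<and> Pi\<^sub>E UNIV V \<subseteq> U"
    unfolding openin_cantor_alt .
  show "\<forall>y\<in>U. \<exists>n. cyl (restr y n) \<subseteq> U"
  proof
    fix y assume "y \<in> U"
    then obtain V where V: "finite {i. V i \<noteq> UNIV}" "y \<in> Pi\<^sub>E UNIV V" "Pi\<^sub>E UNIV V \<subseteq> U"
      using H by blast
    obtain n where n: "{i. V i \<noteq> UNIV} \<subseteq> {..<n}" using finite_nat_bounded[OF V(1)] by blast
    have "cyl (restr y n) \<subseteq> Pi\<^sub>E UNIV V"
    proof
      fix z assume z: "z \<in> cyl (restr y n)"
      have "z i \<in> V i" for i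
      proof (cases "V i = UNIV")
        case False
        then have "i < n" using n by auto
        then have "z i = y i" using z by (simp add: cyl_restr_iff)
        moreover have "y i \<in> V i" using V(2) by (simp add: PiE_iff)
        ultimately show ?thesis by simp
      qed simp
      then show "z \<in> Pi\<^sub>E UNIV V" by (simp add: PiE_iff)
    qed
    then show "\<exists>n. cyl (restr y n) \<subseteq> U" using V(3) by blast
  qed
next
  assume H: "\<forall>y\<in>U. \<exists>n. cyl (restr y n) \<subseteq> U"
  show "openin cantor_top U"
    unfolding openin_cantor_alt
  proof (intro ballI)
    fix y assume "y \<in> U"
    then obtain n where n: "cyl (restr y n) \<subseteq> U" using H by blast
    define V where "V = (\<lambda>i. if i < n then {y i} else (UNIV::bool set))"
    have "{i. V i \<noteq> UNIV} \<subseteq> {..<n}" unfolding V_def by (auto split: if_splits)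
    then have "finite {i. V i \<noteq> UNIV}" using finite_subset by blast
    moreover have "Pi\<^sub>E UNIV V = cyl (restr y n)"
    proof (intro set_eqI)
      fix z show "z \<in> Pi\<^sub>E UNIV V \<longleftrightarrow> z \<in> cyl (restr y n)"
        unfolding V_def cyl_restr_iff PiE_iff by simp
    qed
    moreover have "y \<in> cyl (restr y n)" by (simp add: cyl_restr_iff)
    ultimately show "\<exists>V. finite {i. V i \<noteq> UNIV} \<and> y \<in> Pi\<^sub>E UNIV V \<and> Pi\<^sub>E UNIV V \<subseteq> U"
      using n by metis
  qed
qed

lemma compact_cantor: "compact_space cantor_top"
  unfolding cantor_top_def compact_space_product_topology
  by (simp add: compact_space_discrete_topology)

lemma open_sets_cantor:
  assumes "openin cantor_top U" shows "U \<in> sets cantor_M"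
proof -
  have "U = \<Union> (cyl ` {s. cyl s \<subseteq> U})"
  proof
    show "U \<subseteq> \<Union> (cyl ` {s. cyl s \<subseteq> U})"
    proof
      fix y assume "y \<in> U"
      then obtain n where "cyl (restr y n) \<subseteq> U" using assms openin_cantor_iff by blast
      moreover have "y \<in> cyl (restr y n)" by (simp add: cyl_restr_iff)
      ultimately show "y \<in> \<Union> (cyl ` {s. cyl s \<subseteq> U})" by blast
    qed
  qed auto
  also have "\<dots> \<in> sets cantor_M"
    by (intro sets.countable_UN') auto
  finally show ?thesis .
qed

lemma closed_sets_cantor:
  assumes "closedin cantor_top U" shows "U \<in> sets cantor_M"
proof -
  have "openin cantor_top (UNIV - U)" using assms by (simp add: closedin_def)
  then have "UNIV - U \<in> sets cantor_M" by (rule open_sets_cantor)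
  then have "space cantor_M - (UNIV - U) \<in> sets cantor_M" by blast
  moreover have "space cantor_M - (UNIV - U) = U" by auto
  ultimately show ?thesis by simp
qed


definition tri :: "nat \<Rightarrow> nat" where "tri k = k * (k + 1) div 2"

lemma tri_0[simp]: "tri 0 = 0" by (simp add: tri_def)
lemma tri_Suc: "tri (Suc k) = tri k + Suc k"
  unfolding tri_def by (induction k) auto

lemma tri_mono: "j \<le> k \<Longrightarrow> tri j \<le> tri k"
  by (induction k) (auto simp: tri_Suc le_Suc_eq)

lemma tri_strict: "j < k \<Longrightarrow> tri j < tri k"
proof (induction k)
  case (Suc k) then show ?case using tri_mono[of j k] by (auto simp: tri_Suc less_Suc_eq)
qed simp

lemma tri_less_iff: "tri j < tri k \<longleftrightarrow> j < k"
  using tri_strict tri_mono by (meson leD leI)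

lemma tri_ge: "k \<le> tri k"
  by (induction k) (auto simp: tri_Suc)

lemma block_of_alt: "block_of k = (LEAST j. k < tri (Suc j))"
proof -
  have "(j + 1) * (j + 2) div 2 = tri (Suc j)" for j
    unfolding tri_def by (simp add: algebra_simps)
  then show ?thesis unfolding block_of_def by simp
qed

lemma block_of_bounds: "tri (block_of k) \<le> k \<and> k < tri (Suc (block_of k))"
proof -
  have ex: "k < tri (Suc k)" using tri_ge[of "Suc k"] by simp
  have 1: "k < tri (Suc (block_of k))"
    unfolding block_of_alt by (rule LeastI[of "\<lambda>j. k < tri (Suc j)"]) (rule ex)
  have 2: "tri (block_of k) \<le> k"
  proof (cases "block_of k")
    case (Suc j)
    then have "\<not> k < tri (Suc j)"
      using not_less_Least[of j "\<lambda>j. k < tri (Suc j)"] unfolding block_of_alt by auto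
    then show ?thesis using Suc by simp
  qed simp
  show ?thesis using 1 2 by simp
qed

lemma block_of_eq: "tri j \<le> k \<Longrightarrow> k < tri (Suc j) \<Longrightarrow> block_of k = j"
proof -
  assume a: "tri j \<le> k" "k < tri (Suc j)"
  have b: "tri (block_of k) \<le> k" "k < tri (Suc (block_of k))" using block_of_bounds by auto
  have "\<not> block_of k < j"
  proof
    assume "block_of k < j" then have "Suc (block_of k) \<le> j" by simp
    then have "tri (Suc (block_of k)) \<le> tri j" by (rule tri_mono)
    then show False using a b by simp
  qed
  moreover have "\<not> j < block_of k"
  proof
    assume "j < block_of k" then have "Suc j \<le> block_of k" by simp
    then have "tri (Suc j) \<le> tri (block_of k)" by (rule tri_mono)
    then show False using a b by simp
  qed
  ultimately show ?thesis by simp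
qed

lemma block_of_less_iff: "block_of k < m \<longleftrightarrow> k < tri m"
proof
  assume "block_of k < m"
  then have "tri (Suc (block_of k)) \<le> tri m" by (intro tri_mono) simp
  then show "k < tri m" using block_of_bounds[of k] by simp
next
  assume "k < tri m"
  show "block_of k < m"
  proof (rule ccontr)
    assume "\<not> block_of k < m" then have "tri m \<le> tri (block_of k)" by (intro tri_mono) simp
    then show False using block_of_bounds[of k] \<open>k < tri m\<close> by simp
  qed
qed

lemma stretch_list_snoc: "stretch_list (s @ [c]) = stretch_list s @ replicate (length s + 1) c"
proof -
  have e1: "map (\<lambda>j. replicate (j + 1) ((s @ [c]) ! j)) [0..<length s] = map (\<lambda>j. replicate (j + 1) (s ! j)) [0..<length s]"
  proof (rule map_cong[OF refl])
    fix j assume "j \<in> set [0..<length s]"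
    then have "(s @ [c]) ! j = s ! j" by (simp add: nth_append)
    then show "replicate (j + 1) ((s @ [c]) ! j) = replicate (j + 1) (s ! j)" by (simp only:)
  qed
  have e2: "[0..<length (s @ [c])] = [0..<length s] @ [length s]" by simp
  show ?thesis unfolding stretch_list_def e2 map_append concat.simps concat_append e1 by simp
qed

lemma stretch_list_Nil[simp]: "stretch_list [] = []"
  unfolding stretch_list_def by simp

lemma length_stretch_list[simp]: "length (stretch_list s) = tri (length s)"
  by (induction s rule: rev_induct) (simp_all add: stretch_list_snoc tri_Suc)

lemma stretch_list_nth: "k < tri (length s) \<Longrightarrow> stretch_list s ! k = s ! block_of k"
proof (induction s arbitrary: k rule: rev_induct)
  case Nil then show ?case by simp
next
  case (snoc c s)
  show ?case
  proof (cases "k < tri (length s)")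
    case True
    then have "block_of k < length s" by (simp add: block_of_less_iff)
    then show ?thesis using True snoc.IH by (simp add: stretch_list_snoc nth_append)
  next
    case False
    then have "block_of k = length s" using snoc.prems
      by (intro block_of_eq) (auto simp: tri_Suc)
    then show ?thesis using False snoc.prems by (simp add: stretch_list_snoc nth_append tri_Suc del: replicate.simps)
  qed
qed

lemma stretch_nth: "stretch x k = x (block_of k)"
  unfolding stretch_def by simp

lemma restr_stretch: "restr (stretch x) (tri m) = stretch_list (restr x m)"
proof (rule nth_equalityI)
  show "length (restr (stretch x) (tri m)) = length (stretch_list (restr x m))" by simp
  fix k assume "k < length (restr (stretch x) (tri m))"
  then have k: "k < tri m" by simp
  then have "block_of k < m" by (simp add: block_of_less_iff)
  then show "restr (stretch x) (tri m) ! k = stretch_list (restr x m) ! k"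
    using k by (simp add: restr_nth stretch_list_nth stretch_nth)
qed

lemma restr_Suc: "restr x (Suc m) = restr x m @ [x m]"
  unfolding restr_def by simp

lemma stretch_list_take: "j \<le> length t \<Longrightarrow> stretch_list (take j t) = take (tri j) (stretch_list t)"
proof (rule nth_equalityI)
  assume j: "j \<le> length t"
  then have "tri j \<le> tri (length t)" by (rule tri_mono)
  then show "length (stretch_list (take j t)) = length (take (tri j) (stretch_list t))"
    using j by (simp add: min_def)
  fix k assume "k < length (stretch_list (take j t))"
  have mj: "min (length t) j = j" using j by simp
  then have k: "k < tri j" using \<open>k < length (stretch_list (take j t))\<close> by simp
  then have "block_of k < j" by (simp add: block_of_less_iff)
  moreover have "k < tri (length t)" using k \<open>tri j \<le> tri (length t)\<close> by simp
  ultimately show "stretch_list (take j t) ! k = take (tri j) (stretch_list t) ! k"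
    using k j mj by (simp add: stretch_list_nth)
qed

lemma stretch_list_inj: "stretch_list s = stretch_list t \<Longrightarrow> length s = length t \<Longrightarrow> s = t"
proof (rule nth_equalityI)
  assume e: "stretch_list s = stretch_list t" and l: "length s = length t"
  show "length s = length t" by fact
  fix i assume i: "i < length s"
  have bi: "block_of (tri i) = i" by (rule block_of_eq) (auto simp: tri_Suc)
  have "tri i < tri (length s)" using i by (simp add: tri_less_iff)
  then show "s ! i = t ! i"
    using e l stretch_list_nth[of "tri i" s] stretch_list_nth[of "tri i" t] bi by simp
qed


interpretation CM: prob_space cantor_M by (rule prob_cantor)

lemma mu_le1: "mu A \<le> 1"
  unfolding mu_def by (rule CM.prob_le_1)

lemma mu_nonneg: "0 \<le> mu A"
  unfolding mu_def by simp

lemma mu_mono: "A \<subseteq> B \<Longrightarrow> B \<in> sets cantor_M \<Longrightarrow> mu A \<le> mu B"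
  unfolding mu_def by (rule CM.finite_measure_mono)

lemma in_cyl_restr_self[simp]: "y \<in> cyl (restr y n)"
  by (simp add: cyl_restr_iff)

definition flip :: "(nat \<Rightarrow> bool) \<Rightarrow> nat \<Rightarrow> (nat \<Rightarrow> bool)" where
  "flip y n = y(n := \<not> y n)"

lemma flip_in_cyl: "flip y n \<in> cyl (restr y n)"
  by (simp add: cyl_restr_iff flip_def)

lemma flip_neq: "flip y n \<noteq> y"
  unfolding flip_def by (metis fun_upd_same)

lemma closed_singleton: "closedin cantor_top {p}"
proof -
  have "openin cantor_top (UNIV - {p})"
    unfolding openin_cantor_iff
  proof
    fix y assume "y \<in> UNIV - {p}"
    then obtain i where i: "y i \<noteq> p i" by auto
    have "cyl (restr y (Suc i)) \<subseteq> UNIV - {p}"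
      using i by (auto simp: cyl_restr_iff)
    then show "\<exists>n. cyl (restr y n) \<subseteq> UNIV - {p}" by blast
  qed
  then show ?thesis by (simp add: closedin_def)
qed

lemma not_open_singleton: "\<not> openin cantor_top {p}"
proof
  assume "openin cantor_top {p}"
  then obtain n where "cyl (restr p n) \<subseteq> {p}" unfolding openin_cantor_iff by blast
  then show False using flip_in_cyl[of p n] flip_neq[of p n] by blast
qed

lemma singleton_null: "{p} \<in> null_sets cantor_M"
proof -
  have s: "{p} \<in> sets cantor_M" by (rule closed_sets_cantor[OF closed_singleton])
  have le: "mu {p} \<le> (1/2) ^ n" for n
  proof -
    have "mu {p} \<le> mu (cyl (restr p n))" by (rule mu_mono) auto
    then show ?thesis by (simp add: mu_cyl)
  qed
  have "mu {p} \<le> 0"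
  proof (rule ccontr)
    assume "\<not> mu {p} \<le> 0"
    then obtain n where "(1/2::real) ^ n < mu {p}" using real_arch_pow_inv[of "mu {p}" "1/2"] by auto
    then show False using le[of n] by simp
  qed
  then have "measure cantor_M {p} = 0" using mu_nonneg[of "{p}"] unfolding mu_def by simp
  then have "emeasure cantor_M {p} = 0" using s by (simp add: CM.emeasure_eq_measure)
  then show ?thesis using s by (auto simp: null_sets_def)
qed

lemma countable_null: "countable S \<Longrightarrow> S \<in> null_sets cantor_M"
proof -
  assume "countable S"
  then have "(\<Union>x\<in>S. {x}) \<in> null_sets cantor_M" by (intro null_sets_UN' singleton_null)
  then show ?thesis by simp
qed

definition p0 :: "nat \<Rightarrow> bool" where "p0 = (\<lambda>_. False)"

definition odd1 :: "bool list \<Rightarrow> bool" where "odd1 t = odd (length (filter id t))"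

definition Dset :: "bool list \<Rightarrow> (nat \<Rightarrow> bool) set" where
  "Dset t = (if odd1 t then UNIV - {p0} else {p0})"

definition Cset :: "bool list \<Rightarrow> (nat \<Rightarrow> bool) set" where
  "Cset t = (if odd1 t then UNIV else {p0})"

lemma closure_Dset: "cantor_top closure_of (Dset t) = Cset t"
proof (cases "odd1 t")
  case True
  have "cantor_top closure_of (UNIV - {p0}) = UNIV"
  proof -
    have "p0 \<in> cantor_top closure_of (UNIV - {p0})"
      unfolding in_closure_of
    proof (intro conjI allI impI)
      fix T assume T: "p0 \<in> T \<and> openin cantor_top T"
      then obtain n where "cyl (restr p0 n) \<subseteq> T" unfolding openin_cantor_iff by blast
      then show "\<exists>y. y \<in> UNIV - {p0} \<and> y \<in> T"
        using flip_in_cyl[of p0 n] flip_neq[of p0 n] by blast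
    qed simp
    moreover have "UNIV - {p0} \<subseteq> cantor_top closure_of (UNIV - {p0})"
      by (rule closure_of_subset) simp
    ultimately show ?thesis by blast
  qed
  then show ?thesis using True unfolding Dset_def Cset_def by simp
next
  case False
  then show ?thesis unfolding Dset_def Cset_def by (simp add: closure_of_closedin closed_singleton)
qed

lemma interior_Dset: "cantor_top interior_of (Dset t) = (if odd1 t then UNIV - {p0} else {})"
proof (cases "odd1 t")
  case True
  have "openin cantor_top (UNIV - {p0})" using closed_singleton[of p0] by (simp add: closedin_def)
  then show ?thesis using True unfolding Dset_def by (simp add: interior_of_openin)
next
  case False
  have "cantor_top interior_of {p0} = {}"
  proof (rule ccontr)
    assume "cantor_top interior_of {p0} \<noteq> {}"
    then have "cantor_top interior_of {p0} = {p0}" using interior_of_subset[of cantor_top "{p0}"] by blast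
    then show False using openin_interior_of[of cantor_top "{p0}"] not_open_singleton by simp
  qed
  then show ?thesis using False unfolding Dset_def by simp
qed

lemma mu_UNIV: "mu UNIV = 1"
  using CM.prob_space by (simp add: mu_def)

lemma mu_compl_p: "mu (UNIV - {p}) = 1"
proof -
  have "mu (UNIV - {p}) = mu UNIV" unfolding mu_def
    by (rule measure_Diff_null_set) (auto simp: singleton_null intro: sets.top[of cantor_M, simplified])
  then show ?thesis using mu_UNIV by simp
qed

lemma mu_p: "mu {p} = 0"
  using singleton_null[of p] unfolding mu_def by (simp add: null_sets_def CM.emeasure_eq_measure)

lemma mu_cyl_pos: "0 < mu (cyl s)"
  by (simp add: mu_cyl)

lemma dualistic_Dset: "dualistic (Dset t)"
proof (cases "odd1 t")
  case True
  have s: "UNIV - {p0} \<in> sets cantor_M"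
    using closed_singleton[of p0] by (intro open_sets_cantor) (simp add: closedin_def)
  have "dens_ratio (UNIV - {p0}) z n = 1" for z n
  proof -
    have "(UNIV - {p0}) \<inter> cyl (restr z n) = cyl (restr z n) - {p0}" by blast
    then have "mu ((UNIV - {p0}) \<inter> cyl (restr z n)) = mu (cyl (restr z n))"
      unfolding mu_def by (simp add: measure_Diff_null_set singleton_null)
    then show ?thesis unfolding dens_ratio_def using mu_cyl_pos[of "restr z n"] by simp
  qed
  then have "dens_ratio (UNIV - {p0}) z = (\<lambda>n. 1)" for z by (intro ext) simp
  then have "density_is (UNIV - {p0}) z 1" for z unfolding density_is_def by simp
  then show ?thesis using True s unfolding dualistic_def Dset_def by auto
next
  case False
  have s: "{p0} \<in> sets cantor_M" by (rule closed_sets_cantor[OF closed_singleton])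
  have "dens_ratio {p0} z n = 0" for z n
  proof -
    have "mu ({p0} \<inter> cyl (restr z n)) \<le> mu {p0}" by (rule mu_mono) (auto simp: s)
    then have "mu ({p0} \<inter> cyl (restr z n)) = 0" using mu_p mu_nonneg by (metis antisym)
    then show ?thesis unfolding dens_ratio_def by simp
  qed
  then have "dens_ratio {p0} z = (\<lambda>n. 0)" for z by (intro ext) simp
  then have "density_is {p0} z 0" for z unfolding density_is_def by simp
  then show ?thesis using False s unfolding dualistic_def Dset_def by auto
qed

lemma compliant_Dset: "compliant T Dset"
  unfolding compliant_def
proof (intro allI impI conjI)
  fix t
  show "dualistic (Dset t)" by (rule dualistic_Dset)
  show "Dset t \<noteq> {}" unfolding Dset_def using flip_neq[of p0 0] by auto
  show "Dset t \<noteq> UNIV" unfolding Dset_def using flip_neq[of p0 0] by auto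
  show "mu (cantor_top interior_of Dset t) = mu (cantor_top closure_of Dset t)"
    unfolding interior_Dset closure_Dset Cset_def
    using mu_compl_p[of p0] mu_p[of p0] mu_UNIV by (simp add: mu_def)
qed


definition offs :: "(bool list \<Rightarrow> bool) \<Rightarrow> (nat \<Rightarrow> bool) set" where
  "offs T = stretch ` branches T \<union>
     (\<Union>{lconc (stretch_list t @ a) ` Cset t | t a. T t \<and> a \<in> Fl (length t)})"

lemma offs_eq: "closed_offspring T Dset = offs T"
  unfolding closed_offspring_def offs_def closure_Dset ..

definition shft :: "nat \<Rightarrow> (nat \<Rightarrow> bool) \<Rightarrow> (nat \<Rightarrow> bool)" where
  "shft n y = (\<lambda>i. y (i + n))"

lemma restr_add: "restr y (a + b) = restr y a @ restr (shft a y) b"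
proof (rule nth_equalityI)
  show "length (restr y (a + b)) = length (restr y a @ restr (shft a y) b)" by simp
  fix i assume "i < length (restr y (a + b))"
  then have i: "i < a + b" by simp
  show "restr y (a + b) ! i = (restr y a @ restr (shft a y) b) ! i"
  proof (cases "i < a")
    case True then show ?thesis using i by (simp add: restr_nth nth_append)
  next
    case False
    then have "i - a + a = i" by simp
    then show ?thesis using i False by (simp add: restr_nth nth_append shft_def)
  qed
qed

lemma cyl_append_iff: "y \<in> cyl (u @ v) \<longleftrightarrow> y \<in> cyl u \<and> shft (length u) y \<in> cyl v"
proof -
  have "restr y (length (u @ v)) = restr y (length u) @ restr (shft (length u) y) (length v)"
    by (simp add: restr_add)
  then show ?thesis unfolding cyl_def by simp
qed

lemma lconc_in_cyl: "lconc u z \<in> cyl (u @ v) \<longleftrightarrow> z \<in> cyl v"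
proof -
  have "lconc u z \<in> cyl u" unfolding cyl_iff lconc_def by simp
  moreover have "shft (length u) (lconc u z) = z" unfolding shft_def lconc_def by simp
  ultimately show ?thesis by (simp add: cyl_append_iff)
qed

lemma lconc_in_cyl1: "lconc u z \<in> cyl u"
  using lconc_in_cyl[of u z "[]"] by (simp add: cyl_iff)

lemma shft_lconc[simp]: "shft (length u) (lconc u z) = z"
  unfolding shft_def lconc_def by simp

lemma lconc_shft: "y \<in> cyl u \<Longrightarrow> lconc u (shft (length u) y) = y"
  unfolding lconc_def shft_def cyl_iff by (auto simp: fun_eq_iff)

lemma cyl_restr_take: "y \<in> cyl u \<Longrightarrow> k \<le> length u \<Longrightarrow> restr y k = take k u"
  by (rule nth_equalityI) (auto simp: cyl_iff restr_nth)

lemma cyl_eq_restr: "y \<in> cyl u \<longleftrightarrow> restr y (length u) = u"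
  unfolding cyl_def by simp

lemma Fl_length: "a \<in> Fl n \<Longrightarrow> length a = Suc n"
  unfolding Fl_def by simp

lemma rep_notin_Fl: "replicate (Suc n) c \<notin> Fl n"
  unfolding Fl_def by (cases c) simp_all

lemma Fl_intro: "length a = Suc n \<Longrightarrow> (\<And>c. a \<noteq> replicate (Suc n) c) \<Longrightarrow> a \<in> Fl n"
  unfolding Fl_def by simp

lemma block_const:
  assumes y1: "y \<in> cyl (stretch_list t @ a)" and la: "length a = Suc (length t)"
    and y2: "y \<in> cyl (stretch_list t')" and lt: "length t < length t'"
  shows "a = replicate (Suc (length t)) (t' ! length t)"
proof -
  let ?m = "length t"
  have A: "restr y (tri (Suc ?m)) = stretch_list t @ a"
    using y1 la unfolding cyl_eq_restr by (simp add: tri_Suc)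
  have le: "tri (Suc ?m) \<le> tri (length t')" using lt by (intro tri_mono) simp
  have "restr y (tri (Suc ?m)) = take (tri (Suc ?m)) (stretch_list t')"
    using y2 le by (intro cyl_restr_take) simp_all
  also have "\<dots> = stretch_list (take (Suc ?m) t')"
    using lt by (simp add: stretch_list_take)
  also have "take (Suc ?m) t' = take ?m t' @ [t' ! ?m]"
    using lt by (simp add: take_Suc_conv_app_nth)
  finally have "stretch_list t @ a = stretch_list (take ?m t') @ replicate (?m + 1) (t' ! ?m)"
    using A lt by (simp add: stretch_list_snoc min_def)
  moreover have "length (stretch_list t) = length (stretch_list (take ?m t'))"
    using lt by simp
  ultimately show ?thesis by simp
qed

lemma stretch_in_cyl: "stretch x \<in> cyl (stretch_list (restr x m))"
  unfolding cyl_eq_restr by (simp add: restr_stretch)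

lemma stretch_block:
  assumes "stretch x \<in> cyl (stretch_list t @ a)" "length a = Suc (length t)"
  shows "a = replicate (Suc (length t)) (x (length t))"
proof -
  have "a = replicate (Suc (length t)) (restr x (Suc (length t)) ! length t)"
    using block_const[OF assms stretch_in_cyl[of x "Suc (length t)"]] by simp
  then show ?thesis by (simp add: restr_nth)
qed

lemma two_blocks:
  assumes y1: "y \<in> cyl (stretch_list t @ a)" and a: "a \<in> Fl (length t)"
    and y2: "y \<in> cyl (stretch_list t' @ a')" and a': "a' \<in> Fl (length t')"
  shows "t = t' \<and> a = a'"
proof -
  have la: "length a = Suc (length t)" and la': "length a' = Suc (length t')"
    using a a' by (auto simp: Fl_length)
  have y1': "y \<in> cyl (stretch_list t)" and y2': "y \<in> cyl (stretch_list t')"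
    using y1 y2 by (auto simp: cyl_append_iff)
  have "\<not> length t < length t'"
  proof
    assume "length t < length t'"
    then have "a = replicate (Suc (length t)) (t' ! length t)" by (rule block_const[OF y1 la y2'])
    then show False using a rep_notin_Fl by metis
  qed
  moreover have "\<not> length t' < length t"
  proof
    assume "length t' < length t"
    then have "a' = replicate (Suc (length t')) (t ! length t')" by (rule block_const[OF y2 la' y1'])
    then show False using a' rep_notin_Fl by metis
  qed
  ultimately have l: "length t = length t'" by simp
  have "stretch_list t @ a = stretch_list t' @ a'"
    using y1 y2 la la' l unfolding cyl_eq_restr by simp
  then have "stretch_list t = stretch_list t' \<and> a = a'" using l by simp
  then show ?thesis using l stretch_list_inj by blast
qed

lemma block_char:
  assumes Tt: "T t" and a: "a \<in> Fl (length t)" and y: "y \<in> cyl (stretch_list t @ a)"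
  shows "y \<in> offs T \<longleftrightarrow> shft (length (stretch_list t @ a)) y \<in> Cset t"
proof
  assume "shft (length (stretch_list t @ a)) y \<in> Cset t"
  then have "y \<in> lconc (stretch_list t @ a) ` Cset t"
    using lconc_shft[OF y] by (metis image_eqI)
  then show "y \<in> offs T" unfolding offs_def using Tt a by blast
next
  assume "y \<in> offs T"
  then consider (br) x where "y = stretch x" |
     (pc) t' a' z where "T t'" "a' \<in> Fl (length t')" "z \<in> Cset t'" "y = lconc (stretch_list t' @ a') z"
    unfolding offs_def by blast
  then show "shft (length (stretch_list t @ a)) y \<in> Cset t"
  proof cases
    case br
    have "length a = Suc (length t)" using a by (simp add: Fl_length)
    then have "a = replicate (Suc (length t)) (x (length t))" using stretch_block y br by blast
    then show ?thesis using a rep_notin_Fl by metis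
  next
    case pc
    have "y \<in> cyl (stretch_list t' @ a')" using pc(4) lconc_in_cyl1 by simp
    then have "t = t' \<and> a = a'" using two_blocks[OF y a _ pc(2)] by blast
    then show ?thesis using pc shft_lconc[of "stretch_list t @ a" z] by simp
  qed
qed


lemma stretch_prefix:
  assumes "y \<in> cyl (stretch_list t)" "y \<in> cyl (stretch_list t')" "length t \<le> length t'"
  shows "t = take (length t) t'"
proof -
  have "restr y (tri (length t)) = stretch_list t" using assms(1) unfolding cyl_eq_restr by simp
  moreover have "restr y (tri (length t)) = take (tri (length t)) (stretch_list t')"
    using assms(2,3) by (intro cyl_restr_take) (simp_all add: tri_mono)
  moreover have "take (tri (length t)) (stretch_list t') = stretch_list (take (length t) t')"
    using assms(3) by (simp add: stretch_list_take)
  ultimately show ?thesis using assms(3) by (rule_tac stretch_list_inj) (simp_all add: min_def)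
qed

lemma cyl_restr_mono:
  assumes "y \<in> cyl u" "y' \<in> cyl (restr y n)" "length u \<le> n" shows "y' \<in> cyl u"
proof -
  have "\<forall>i<n. y' i = y i" using assms(2) by (simp only: cyl_restr_iff)
  then show ?thesis using assms(1,3) unfolding cyl_iff by auto
qed

lemma pruned_take: "pruned_tree T \<Longrightarrow> T s \<Longrightarrow> T (take n s)"
  unfolding pruned_tree_def by blast

lemma pruned_Nil: "pruned_tree T \<Longrightarrow> T []"
  unfolding pruned_tree_def by (metis take_0)

definition blk :: "(nat \<Rightarrow> bool) \<Rightarrow> nat \<Rightarrow> bool list" where
  "blk y m = restr (shft (tri m) y) (Suc m)"

lemma length_blk[simp]: "length (blk y m) = Suc m"
  unfolding blk_def by simp

lemma cyl_blk: "y \<in> cyl u \<Longrightarrow> length u = tri m \<Longrightarrow> y \<in> cyl (u @ blk y m)"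
  unfolding blk_def by (simp add: cyl_append_iff)

lemma blk_cases: "blk y m \<in> Fl m \<or> (\<exists>c. blk y m = replicate (Suc m) c)"
  using Fl_intro[of "blk y m" m] by auto

lemma branch_restr: "x \<in> branches T \<Longrightarrow> T (restr x n)"
  unfolding branches_def by simp

lemma all_levels_stretch:
  assumes H: "\<forall>k. \<exists>t. T t \<and> length t = k \<and> y \<in> cyl (stretch_list t)"
  shows "y \<in> stretch ` branches T"
proof -
  obtain tt where tt: "\<And>k. T (tt k) \<and> length (tt k) = k \<and> y \<in> cyl (stretch_list (tt k))"
    using H by metis
  define x where "x = (\<lambda>i. y (tri i))"
  have bt: "block_of (tri i) = i" for i by (rule block_of_eq) (auto simp: tri_Suc)
  have rx: "restr x k = tt k" for k
  proof (rule nth_equalityI)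
    show "length (restr x k) = length (tt k)" using tt by simp
    fix i assume "i < length (restr x k)"
    then have i: "i < k" by simp
    then have "tri i < tri k" by (simp add: tri_less_iff)
    then have "y (tri i) = stretch_list (tt k) ! tri i" using tt[of k] by (simp add: cyl_iff)
    also have "\<dots> = tt k ! i" using \<open>tri i < tri k\<close> tt[of k] by (simp add: stretch_list_nth bt)
    finally show "restr x k ! i = tt k ! i" using i by (simp add: restr_nth x_def)
  qed
  have "x \<in> branches T" unfolding branches_def using rx tt by simp
  moreover have "y = stretch x"
  proof
    fix j
    have "j < tri (Suc j)" using tri_ge[of "Suc j"] by simp
    then have "block_of j < Suc j" by (simp add: block_of_less_iff)
    have "y j = stretch_list (tt (Suc j)) ! j" using tt[of "Suc j"] \<open>j < tri (Suc j)\<close> by (simp add: cyl_iff)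
    also have "\<dots> = tt (Suc j) ! block_of j" using tt[of "Suc j"] \<open>j < tri (Suc j)\<close> by (simp add: stretch_list_nth)
    also have "\<dots> = x (block_of j)" using rx[of "Suc j"] \<open>block_of j < Suc j\<close> by (metis restr_nth)
    finally show "y j = stretch x j" by (simp add: stretch_nth)
  qed
  ultimately show ?thesis by blast
qed

lemma offs_in_cyl_cases:
  assumes "y \<in> offs T"
  obtains (br) x where "x \<in> branches T" "y = stretch x"
    | (pc) t a z where "T t" "a \<in> Fl (length t)" "z \<in> Cset t" "y = lconc (stretch_list t @ a) z"
                       "y \<in> cyl (stretch_list t @ a)"
  using assms unfolding offs_def using lconc_in_cyl1 by blast

lemma closed_offs:
  assumes pr: "pruned_tree T"
  shows "closedin cantor_top (offs T)"
proof -
  have "openin cantor_top (UNIV - offs T)"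
    unfolding openin_cantor_iff
  proof
    fix y assume "y \<in> UNIV - offs T"
    then have ny: "y \<notin> offs T" by simp
    define P where "P k \<longleftrightarrow> (\<exists>t. T t \<and> length t = k \<and> y \<in> cyl (stretch_list t))" for k
    have sub: "stretch ` branches T \<subseteq> offs T" unfolding offs_def by (rule Un_upper1)
    have "\<not> (\<forall>k. P k)" using all_levels_stretch[of T y] ny sub unfolding P_def by blast
    then obtain k where "\<not> P k" by blast
    define k0 where "k0 = (LEAST k. \<not> P k)"
    have nk0: "\<not> P k0" unfolding k0_def using \<open>\<not> P k\<close> by (rule LeastI)
    have "P 0" unfolding P_def using pruned_Nil[OF pr] by (intro exI[of _ "[]"]) (simp add: cyl_iff)
    then obtain m where k0: "k0 = Suc m" using nk0 by (cases k0) auto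
    have "P m" using not_less_Least[of m "\<lambda>k. \<not> P k"] k0 unfolding k0_def[symmetric] by auto
    then obtain t where t: "T t" "length t = m" "y \<in> cyl (stretch_list t)" unfolding P_def by blast
    let ?a = "blk y m"
    have ya: "y \<in> cyl (stretch_list t @ ?a)" using t by (intro cyl_blk) simp_all
    show "\<exists>n. cyl (restr y n) \<subseteq> UNIV - offs T"
    proof (cases "?a \<in> Fl m")
      case True
      let ?L = "length (stretch_list t @ ?a)"
      have Fl': "?a \<in> Fl (length t)" using True t(2) by simp
      have "shft ?L y \<notin> Cset t" using block_char[of T t "blk y m" y, OF t(1) Fl' ya] ny by simp
      then have C: "Cset t = {p0}" "shft ?L y \<noteq> p0" unfolding Cset_def by (auto split: if_splits)
      then obtain i where i: "shft ?L y i \<noteq> p0 i" by auto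
      have "cyl (restr y (?L + Suc i)) \<subseteq> UNIV - offs T"
      proof
        fix y' assume y': "y' \<in> cyl (restr y (?L + Suc i))"
        have "y' \<in> cyl (stretch_list t @ ?a)"
          by (rule cyl_restr_mono[OF ya y']) simp
        moreover have "shft ?L y' i = shft ?L y i"
        proof -
          have "\<forall>j< ?L + Suc i. y' j = y j" using y' by (simp only: cyl_restr_iff)
          moreover have "i + ?L < ?L + Suc i" by simp
          ultimately show ?thesis unfolding shft_def by blast
        qed
        then have "shft ?L y' \<noteq> p0" using i by metis
        then have "shft ?L y' \<notin> Cset t" using C(1) by simp
        ultimately have "y' \<notin> offs T" using block_char[of T t "blk y m" y', OF t(1) Fl'] by simp
        then show "y' \<in> UNIV - offs T" by simp
      qed
      then show ?thesis by blast
    next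
      case False
      then obtain c where c: "?a = replicate (Suc m) c" using blk_cases by blast
      have sl: "stretch_list (t @ [c]) = stretch_list t @ ?a" using c t(2) by (simp add: stretch_list_snoc)
      have nT: "\<not> T (t @ [c])"
      proof
        assume "T (t @ [c])"
        then have "P (Suc m)" unfolding P_def using ya sl t(2) by (intro exI[of _ "t @ [c]"]) simp
        then show False using nk0 k0 by simp
      qed
      have "cyl (restr y (tri (Suc m))) \<subseteq> UNIV - offs T"
      proof
        fix y' assume y': "y' \<in> cyl (restr y (tri (Suc m)))"
        have y'a: "y' \<in> cyl (stretch_list (t @ [c]))"
          using cyl_restr_mono[OF ya y'] sl t(2) by (simp add: tri_Suc)
        have "y' \<notin> offs T"
        proof
          assume "y' \<in> offs T"
          then show False
          proof (cases rule: offs_in_cyl_cases)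
            case (br x)
            have "y' \<in> cyl (stretch_list (restr x (Suc m)))" using br stretch_in_cyl by simp
            then have "t @ [c] = take (length (t @ [c])) (restr x (Suc m))"
              using y'a t(2) by (intro stretch_prefix) simp_all
            then have "t @ [c] = restr x (Suc m)" using t(2) by simp
            then show False using nT branch_restr[OF br(1)] by simp
          next
            case (pc t' a' z)
            show False
            proof (cases "length t' < Suc m")
              case True
              have la': "length a' = Suc (length t')" using pc(2) by (simp add: Fl_length)
              have "a' = replicate (Suc (length t')) ((t @ [c]) ! length t')"
                using block_const[OF pc(5) la' y'a] True t(2) by simp
              then show False using pc(2) rep_notin_Fl by metis
            next
              case False
              have "y' \<in> cyl (stretch_list t')" using pc(5) by (simp add: cyl_append_iff)
              then have "t @ [c] = take (length (t @ [c])) t'"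
                using y'a t(2) False by (intro stretch_prefix) simp_all
              then have e: "t @ [c] = take (Suc m) t'" using t(2) by simp
              have "T (take (Suc m) t')" by (rule pruned_take[OF pr pc(1)])
              then show False using nT e by simp
            qed
          qed
        qed
        then show "y' \<in> UNIV - offs T" by simp
      qed
      then show ?thesis by blast
    qed
  qed
  then show ?thesis by (simp add: closedin_def)
qed

lemma compact_offs: "pruned_tree T \<Longrightarrow> compactin cantor_top (offs T)"
  by (rule closedin_compact_space[OF compact_cantor closed_offs])

lemma sets_offs: "pruned_tree T \<Longrightarrow> offs T \<in> sets cantor_M"
  by (rule closed_sets_cantor[OF closed_offs])


lemma mu_Un_le: "A \<in> sets cantor_M \<Longrightarrow> B \<in> sets cantor_M \<Longrightarrow> mu (A \<union> B) \<le> mu A + mu B"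
  unfolding mu_def by (rule measure_Un_le)

lemma mu_null: "A \<in> null_sets cantor_M \<Longrightarrow> mu A = 0"
  unfolding mu_def by (simp add: null_sets_def CM.emeasure_eq_measure)

lemma mu_split: "A \<in> sets cantor_M \<Longrightarrow> B \<in> sets cantor_M \<Longrightarrow> mu B = mu (A \<inter> B) + mu (B - A)"
proof -
  assume a: "A \<in> sets cantor_M" "B \<in> sets cantor_M"
  have "measure cantor_M ((A \<inter> B) \<union> (B - A)) = measure cantor_M (A \<inter> B) + measure cantor_M (B - A)"
    using a by (intro CM.finite_measure_Union) auto
  moreover have "(A \<inter> B) \<union> (B - A) = B" by blast
  ultimately show ?thesis unfolding mu_def by simp
qed

definition PP :: "(nat \<Rightarrow> bool) set" where
  "PP = (\<lambda>(t, a). lconc (stretch_list t @ a) p0) ` UNIV"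

lemma PP_null: "PP \<in> null_sets cantor_M"
  unfolding PP_def by (intro countable_null countable_image) simp

lemma level_odd:
  assumes pr: "pruned_tree T" and Tt: "T t" and od: "odd1 t"
  shows "cyl (stretch_list t) - offs T \<subseteq>
           cyl (stretch_list t @ replicate (Suc (length t)) False) \<union> cyl (stretch_list t @ replicate (Suc (length t)) True)"
proof
  fix y assume y: "y \<in> cyl (stretch_list t) - offs T"
  let ?a = "blk y (length t)"
  have ya: "y \<in> cyl (stretch_list t @ ?a)" using y by (intro cyl_blk) simp_all
  show "y \<in> cyl (stretch_list t @ replicate (Suc (length t)) False) \<union> cyl (stretch_list t @ replicate (Suc (length t)) True)"
  proof (cases "?a \<in> Fl (length t)")
    case True
    then have "y \<in> offs T" using block_char[of T t ?a y, OF Tt True ya] od by (simp add: Cset_def)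
    then show ?thesis using y by simp
  next
    case False
    then obtain c where "?a = replicate (Suc (length t)) c" using blk_cases by blast
    then show ?thesis using ya by (cases c) auto
  qed
qed

lemma level_even:
  assumes pr: "pruned_tree T" and Tt: "T t" and od: "\<not> odd1 t"
  shows "offs T \<inter> cyl (stretch_list t) \<subseteq>
           cyl (stretch_list t @ replicate (Suc (length t)) False) \<union> cyl (stretch_list t @ replicate (Suc (length t)) True) \<union> PP"
proof
  fix y assume y: "y \<in> offs T \<inter> cyl (stretch_list t)"
  let ?a = "blk y (length t)"
  have ya: "y \<in> cyl (stretch_list t @ ?a)" using y by (intro cyl_blk) simp_all
  show "y \<in> cyl (stretch_list t @ replicate (Suc (length t)) False) \<union> cyl (stretch_list t @ replicate (Suc (length t)) True) \<union> PP"
  proof (cases "?a \<in> Fl (length t)")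
    case True
    then have "shft (length (stretch_list t @ ?a)) y = p0"
      using block_char[of T t ?a y, OF Tt True ya] od y by (simp add: Cset_def)
    then have "y = lconc (stretch_list t @ ?a) p0" using lconc_shft[OF ya] by simp
    then have "y \<in> PP" unfolding PP_def by (auto intro!: image_eqI[of _ _ "(t, ?a)"])
    then show ?thesis by simp
  next
    case False
    then obtain c where "?a = replicate (Suc (length t)) c" using blk_cases by blast
    then show ?thesis using ya by (cases c) auto
  qed
qed

lemma mu_cyl_rep: "mu (cyl (stretch_list t @ replicate (Suc (length t)) c)) = (1/2) ^ tri (length t) * (1/2) ^ Suc (length t)"
  by (simp add: mu_cyl power_add)

lemma level_odd_mu:
  assumes pr: "pruned_tree T" and Tt: "T t" and od: "odd1 t"
  shows "mu (offs T \<inter> cyl (stretch_list t)) \<ge> (1/2) ^ tri (length t) * (1 - (1/2) ^ length t)"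
proof -
  let ?m = "length t"
  let ?F = "cyl (stretch_list t @ replicate (Suc ?m) False)" and ?T = "cyl (stretch_list t @ replicate (Suc ?m) True)"
  have G: "offs T \<in> sets cantor_M" by (rule sets_offs[OF pr])
  have "mu (cyl (stretch_list t)) = mu (offs T \<inter> cyl (stretch_list t)) + mu (cyl (stretch_list t) - offs T)"
    using G by (intro mu_split) simp_all
  moreover have "mu (cyl (stretch_list t) - offs T) \<le> mu (?F \<union> ?T)"
    using level_odd[OF assms] by (intro mu_mono) auto
  moreover have "mu (?F \<union> ?T) \<le> mu ?F + mu ?T" by (intro mu_Un_le) simp_all
  ultimately have "mu (offs T \<inter> cyl (stretch_list t)) \<ge> mu (cyl (stretch_list t)) - mu ?F - mu ?T" by linarith
  moreover have "mu (cyl (stretch_list t)) - mu ?F - mu ?T = (1/2) ^ tri ?m * (1 - (1/2) ^ ?m)"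
    unfolding mu_cyl_rep by (simp add: mu_cyl algebra_simps)
  ultimately show ?thesis by simp
qed

lemma level_even_mu:
  assumes pr: "pruned_tree T" and Tt: "T t" and od: "\<not> odd1 t"
  shows "mu (offs T \<inter> cyl (stretch_list t)) \<le> (1/2) ^ tri (length t) * (1/2) ^ length t"
proof -
  let ?m = "length t"
  let ?F = "cyl (stretch_list t @ replicate (Suc ?m) False)" and ?T = "cyl (stretch_list t @ replicate (Suc ?m) True)"
  have "mu (offs T \<inter> cyl (stretch_list t)) \<le> mu (?F \<union> ?T \<union> PP)"
    using level_even[OF assms] PP_null by (intro mu_mono) auto
  also have "\<dots> \<le> mu (?F \<union> ?T) + mu PP" using PP_null by (intro mu_Un_le) auto
  also have "\<dots> \<le> mu ?F + mu ?T + mu PP" using mu_Un_le[of ?F ?T] by simp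
  also have "\<dots> = (1/2) ^ tri ?m * (1/2) ^ ?m"
    unfolding mu_cyl_rep mu_null[OF PP_null] by (simp add: algebra_simps)
  finally show ?thesis .
qed


definition Wk :: "(nat \<Rightarrow> bool) \<Rightarrow> nat \<Rightarrow> (nat \<Rightarrow> bool) set" where
  "Wk x k = cyl (stretch_list (restr x k) @ replicate (Suc k) True)"

lemma cyl_stretch_iff: "y \<in> cyl (stretch_list (restr x k)) \<longleftrightarrow> (\<forall>i<tri k. y i = stretch x i)"
  using cyl_restr_iff[of y "stretch x" "tri k"] by (simp add: restr_stretch)

lemma bt: "block_of (tri i) = i" by (rule block_of_eq) (auto simp: tri_Suc)

lemma deviation:
  assumes xF: "\<forall>k\<ge>m. \<not> x k" and n: "tri m \<le> n" and y: "y \<in> cyl (restr (stretch x) n)"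
    and ne: "y \<noteq> stretch x"
  shows "\<exists>k\<ge>m. y \<in> Wk x k \<or> (blk y k \<in> Fl k \<and> y \<in> cyl (stretch_list (restr x k) @ blk y k))"
proof -
  define P where "P k \<longleftrightarrow> y \<in> cyl (stretch_list (restr x k))" for k
  have yi: "\<forall>i<n. y i = stretch x i" using y by (simp add: cyl_restr_iff)
  have Pj: "P j" if "j \<le> m" for j
  proof -
    have "tri j \<le> n" using tri_mono[OF that] n by simp
    then show ?thesis unfolding P_def cyl_stretch_iff using yi by simp
  qed
  have "\<not> (\<forall>k. P k)"
  proof
    assume H: "\<forall>k. P k"
    have "y i = stretch x i" for i
    proof -
      have "i < tri (Suc i)" using tri_ge[of "Suc i"] by simp
      then show ?thesis using H[rule_format, of "Suc i"] unfolding P_def cyl_stretch_iff by simp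
    qed
    then show False using ne by auto
  qed
  then obtain k1 where "\<not> P k1" by blast
  define k0 where "k0 = (LEAST k. \<not> P k)"
  have nk0: "\<not> P k0" unfolding k0_def using \<open>\<not> P k1\<close> by (rule LeastI)
  obtain k where k0: "k0 = Suc k" using nk0 Pj[of 0] by (cases k0) auto
  have Pk: "P k" using not_less_Least[of k "\<lambda>k. \<not> P k"] k0 unfolding k0_def[symmetric] by auto
  have km: "m \<le> k"
  proof (rule ccontr)
    assume "\<not> m \<le> k" then have "k0 \<le> m" using k0 by simp
    then show False using Pj nk0 by blast
  qed
  let ?a = "blk y k"
  have ya: "y \<in> cyl (stretch_list (restr x k) @ ?a)" using Pk unfolding P_def by (intro cyl_blk) simp_all
  show ?thesis
  proof (cases "?a \<in> Fl k")
    case True then show ?thesis using ya km by blast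
  next
    case False
    then obtain c where c: "?a = replicate (Suc k) c" using blk_cases by blast
    have "c = True"
    proof (rule ccontr)
      assume "c \<noteq> True" then have cF: "c = x k" using xF km by auto
      have "stretch_list (restr x (Suc k)) = stretch_list (restr x k) @ ?a"
        using c cF by (simp add: restr_Suc stretch_list_snoc)
      then have "P (Suc k)" unfolding P_def using ya by simp
      then show False using nk0 k0 by simp
    qed
    then show ?thesis using ya c km unfolding Wk_def by auto
  qed
qed

lemma W_bound:
  assumes xF: "\<forall>k\<ge>m. \<not> x k" and km: "m \<le> k"
  shows "mu (cyl (restr (stretch x) n) \<inter> Wk x k) \<le> (1/2) ^ n * (1/2) ^ Suc k"
proof (cases "n \<le> tri k")
  case True
  have "Wk x k \<subseteq> cyl (restr (stretch x) n)"
  proof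
    fix z assume "z \<in> Wk x k"
    then have "z \<in> cyl (stretch_list (restr x k))" unfolding Wk_def by (simp add: cyl_append_iff)
    then show "z \<in> cyl (restr (stretch x) n)" using True unfolding cyl_stretch_iff cyl_restr_iff by simp
  qed
  then have "mu (cyl (restr (stretch x) n) \<inter> Wk x k) = (1/2) ^ (tri k + Suc k)"
    unfolding Wk_def by (simp add: Int_absorb1 mu_cyl)
  also have "\<dots> \<le> (1/2) ^ (n + Suc k)" using True by (intro power_decreasing) simp_all
  finally show ?thesis by (simp add: power_add)
next
  case False
  have "cyl (restr (stretch x) n) \<inter> Wk x k = {}"
  proof (rule ccontr)
    assume "cyl (restr (stretch x) n) \<inter> Wk x k \<noteq> {}"
    then obtain z where z1: "z \<in> cyl (restr (stretch x) n)" and z2: "z \<in> Wk x k" by blast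
    have "z (tri k) = stretch x (tri k)" using z1 False by (simp add: cyl_restr_iff)
    also have "\<dots> = False" using xF km by (simp add: stretch_nth bt)
    finally have a: "\<not> z (tri k)" by simp
    have "shft (tri k) z \<in> cyl (replicate (Suc k) True)" using z2 unfolding Wk_def by (simp add: cyl_append_iff)
    then have "shft (tri k) z 0 = True" by (simp add: cyl_iff)
    then show False using a by (simp add: shft_def)
  qed
  then show ?thesis by (simp add: mu_def)
qed

lemma union_bound:
  assumes xF: "\<forall>k\<ge>m. \<not> x k"
  shows "mu (\<Union>i. cyl (restr (stretch x) n) \<inter> Wk x (m + i)) \<le> (1/2) ^ n * (1/2) ^ m"
proof -
  let ?A = "\<lambda>i. cyl (restr (stretch x) n) \<inter> Wk x (m + i)"
  let ?b = "\<lambda>i. ((1/2::real) ^ n * (1/2) ^ Suc m) * (1/2) ^ i"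
  have bA: "mu (?A i) \<le> ?b i" for i
    using W_bound[OF xF, of "m + i" n] by (simp add: power_add mult.assoc)
  have sb: "?b sums (((1/2) ^ n * (1/2) ^ Suc m) * (1 / (1 - 1/2)))"
    by (intro sums_mult geometric_sums) simp
  have sA: "summable (\<lambda>i. mu (?A i))"
    by (rule summable_comparison_test[OF _ sums_summable[OF sb]]) (use bA mu_nonneg in auto)
  have "mu (\<Union>i. ?A i) \<le> (\<Sum>i. mu (?A i))"
    unfolding mu_def using sA[unfolded mu_def] unfolding Wk_def
    by (intro CM.finite_measure_subadditive_countably) auto
  also have "\<dots> \<le> (\<Sum>i. ?b i)" by (intro suminf_le bA sA sums_summable[OF sb])
  also have "\<dots> = (1/2) ^ n * (1/2) ^ m" using sums_unique[OF sb] by simp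
  finally show ?thesis .
qed


lemma A_sets: "(\<Union>i. cyl (restr (stretch x) n) \<inter> Wk x (m + i)) \<in> sets cantor_M"
  unfolding Wk_def by (intro sets.countable_UN) auto

lemma singleton_sets: "{p} \<in> sets cantor_M"
  by (rule closed_sets_cantor[OF closed_singleton])

lemma odd_tail:
  assumes pr: "pruned_tree T" and xb: "x \<in> branches T" and xF: "\<forall>k\<ge>m. \<not> x k"
    and od: "\<forall>k\<ge>m. odd1 (restr x k)" and n: "tri m \<le> n"
  shows "(1/2) ^ n - (1/2) ^ n * (1/2) ^ m \<le> mu (offs T \<inter> cyl (restr (stretch x) n))"
proof -
  let ?s = "cyl (restr (stretch x) n)"
  let ?U = "\<Union>i. ?s \<inter> Wk x (m + i)"
  have sub: "?s - offs T \<subseteq> {stretch x} \<union> ?U"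
  proof
    fix y assume y: "y \<in> ?s - offs T"
    show "y \<in> {stretch x} \<union> ?U"
    proof (cases "y = stretch x")
      case False
      then obtain k where k: "k \<ge> m" and
        d: "y \<in> Wk x k \<or> (blk y k \<in> Fl k \<and> y \<in> cyl (stretch_list (restr x k) @ blk y k))"
        using deviation[OF xF n] y by blast
      show ?thesis
      proof (cases "y \<in> Wk x k")
        case True
        then have "y \<in> ?s \<inter> Wk x (m + (k - m))" using y k by simp
        then show ?thesis by blast
      next
        case False
        then have f: "blk y k \<in> Fl k" and yc: "y \<in> cyl (stretch_list (restr x k) @ blk y k)" using d by auto
        have f': "blk y k \<in> Fl (length (restr x k))" using f by simp
        have "y \<in> offs T"
          using block_char[of T "restr x k" "blk y k" y, OF branch_restr[OF xb] f' yc] od k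
          by (simp add: Cset_def)
        then show ?thesis using y by simp
      qed
    qed simp
  qed
  have G: "offs T \<in> sets cantor_M" by (rule sets_offs[OF pr])
  have "mu ?s = mu (offs T \<inter> ?s) + mu (?s - offs T)" using G by (intro mu_split) simp_all
  have U: "?U \<in> sets cantor_M" by (rule A_sets)
  have SU: "{stretch x} \<union> ?U \<in> sets cantor_M" by (rule sets.Un[OF singleton_sets U])
  have "mu (?s - offs T) \<le> mu ({stretch x} \<union> ?U)"
    by (rule mu_mono[OF sub SU])
  moreover have "mu ({stretch x} \<union> ?U) \<le> mu {stretch x} + mu ?U"
    by (rule mu_Un_le[OF singleton_sets U])
  moreover note \<open>mu ?s = mu (offs T \<inter> ?s) + mu (?s - offs T)\<close>
  moreover have "mu ?U \<le> (1/2) ^ n * (1/2) ^ m" by (rule union_bound[OF xF])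
  ultimately show ?thesis by (simp add: mu_p mu_cyl)
qed

lemma even_tail:
  assumes pr: "pruned_tree T" and xb: "x \<in> branches T" and xF: "\<forall>k\<ge>m. \<not> x k"
    and od: "\<forall>k\<ge>m. \<not> odd1 (restr x k)" and n: "tri m \<le> n"
  shows "mu (offs T \<inter> cyl (restr (stretch x) n)) \<le> (1/2) ^ n * (1/2) ^ m"
proof -
  let ?s = "cyl (restr (stretch x) n)"
  let ?U = "\<Union>i. ?s \<inter> Wk x (m + i)"
  have sub: "offs T \<inter> ?s \<subseteq> {stretch x} \<union> PP \<union> ?U"
  proof
    fix y assume y: "y \<in> offs T \<inter> ?s"
    show "y \<in> {stretch x} \<union> PP \<union> ?U"
    proof (cases "y = stretch x")
      case False
      then obtain k where k: "k \<ge> m" and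
        d: "y \<in> Wk x k \<or> (blk y k \<in> Fl k \<and> y \<in> cyl (stretch_list (restr x k) @ blk y k))"
        using deviation[OF xF n] y by blast
      show ?thesis
      proof (cases "y \<in> Wk x k")
        case True
        then have "y \<in> ?s \<inter> Wk x (m + (k - m))" using y k by simp
        then show ?thesis by blast
      next
        case False
        then have f: "blk y k \<in> Fl k" and yc: "y \<in> cyl (stretch_list (restr x k) @ blk y k)" using d by auto
        have f': "blk y k \<in> Fl (length (restr x k))" using f by simp
        have "shft (length (stretch_list (restr x k) @ blk y k)) y = p0"
          using block_char[of T "restr x k" "blk y k" y, OF branch_restr[OF xb] f' yc] od k y
          by (simp add: Cset_def)
        then have "y = lconc (stretch_list (restr x k) @ blk y k) p0" using lconc_shft[OF yc] by simp
        then have "y \<in> PP" unfolding PP_def by (auto intro!: image_eqI[of _ _ "(restr x k, blk y k)"])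
        then show ?thesis by simp
      qed
    qed simp
  qed
  have U: "?U \<in> sets cantor_M" by (rule A_sets)
  have P: "PP \<in> sets cantor_M" using PP_null by auto
  have SP: "{stretch x} \<union> PP \<in> sets cantor_M" by (rule sets.Un[OF singleton_sets P])
  have SPU: "{stretch x} \<union> PP \<union> ?U \<in> sets cantor_M" by (rule sets.Un[OF SP U])
  have "mu (offs T \<inter> ?s) \<le> mu ({stretch x} \<union> PP \<union> ?U)"
    by (rule mu_mono[OF sub SPU])
  also have "\<dots> \<le> mu ({stretch x} \<union> PP) + mu ?U"
    by (rule mu_Un_le[OF SP U])
  also have "\<dots> \<le> mu {stretch x} + mu PP + mu ?U"
    using mu_Un_le[OF singleton_sets P, of "stretch x"] by simp
  also have "\<dots> \<le> (1/2) ^ n * (1/2) ^ m"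
    using union_bound[OF xF, of n] by (simp add: mu_p mu_null[OF PP_null])
  finally show ?thesis .
qed

lemma odd1_Suc: "odd1 (restr x (Suc k)) \<longleftrightarrow> (odd1 (restr x k) \<noteq> x k)"
  unfolding odd1_def restr_Suc by simp

lemma dens_ratio_eq: "dens_ratio A z n = mu (A \<inter> cyl (restr z n)) / (1/2) ^ n"
  unfolding dens_ratio_def by (simp add: mu_cyl)

lemma ratio_le1: "dens_ratio (offs T) z n \<le> 1" if "pruned_tree T"
proof -
  have "mu (offs T \<inter> cyl (restr z n)) \<le> mu (cyl (restr z n))" by (intro mu_mono) auto
  then show ?thesis unfolding dens_ratio_def using mu_cyl_pos[of "restr z n"] by simp
qed

lemma ratio_ge0: "0 \<le> dens_ratio A z n"
  unfolding dens_ratio_def using mu_nonneg mu_cyl_pos by simp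

lemma nonNN_density:
  assumes pr: "pruned_tree T" and xb: "x \<in> branches T" and nn: "x \<notin> NN"
  shows "\<exists>d\<in>{0,1}. density_is (offs T) (stretch x) d"
proof -
  have "finite {n. x n}" using nn unfolding NN_def by simp
  then obtain N where N: "{n. x n} \<subseteq> {..<N}" using finite_nat_bounded by blast
  then have xF: "\<forall>k\<ge>N. \<not> x k" by auto
  have par: "odd1 (restr x k) = odd1 (restr x N)" if "N \<le> k" for k
    using that
  proof (induction k rule: dec_induct)
    case (step k) then show ?case using xF by (simp add: odd1_Suc)
  qed simp
  show ?thesis
  proof (cases "odd1 (restr x N)")
    case True
    have "density_is (offs T) (stretch x) 1"
      unfolding density_is_def
    proof (rule LIMSEQ_I)
      fix r :: real assume r: "0 < r"
      obtain m0 where m0: "(1/2::real) ^ m0 < r" using real_arch_pow_inv[OF r, of "1/2"] by auto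
      let ?m = "max m0 N"
      have pm: "(1/2::real) ^ ?m \<le> (1/2) ^ m0" by (intro power_decreasing) simp_all
      have "norm (dens_ratio (offs T) (stretch x) n - 1) < r" if n: "tri ?m \<le> n" for n
      proof -
        have "(1/2) ^ n - (1/2) ^ n * (1/2) ^ ?m \<le> mu (offs T \<inter> cyl (restr (stretch x) n))"
          using xF par True by (intro odd_tail[OF pr xb _ _ n]) auto
        then have "1 - (1/2) ^ ?m \<le> dens_ratio (offs T) (stretch x) n"
          unfolding dens_ratio_eq by (simp add: field_simps)
        moreover have "dens_ratio (offs T) (stretch x) n \<le> 1" by (rule ratio_le1[OF pr])
        ultimately have "norm (dens_ratio (offs T) (stretch x) n - 1) = 1 - dens_ratio (offs T) (stretch x) n"
          "1 - dens_ratio (offs T) (stretch x) n \<le> (1/2) ^ ?m" by auto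
        then show ?thesis using pm m0 by linarith
      qed
      then show "\<exists>no. \<forall>n\<ge>no. norm (dens_ratio (offs T) (stretch x) n - 1) < r" by blast
    qed
    then show ?thesis by blast
  next
    case False
    have "density_is (offs T) (stretch x) 0"
      unfolding density_is_def
    proof (rule LIMSEQ_I)
      fix r :: real assume r: "0 < r"
      obtain m0 where m0: "(1/2::real) ^ m0 < r" using real_arch_pow_inv[OF r, of "1/2"] by auto
      let ?m = "max m0 N"
      have pm: "(1/2::real) ^ ?m \<le> (1/2) ^ m0" by (intro power_decreasing) simp_all
      have "norm (dens_ratio (offs T) (stretch x) n - 0) < r" if n: "tri ?m \<le> n" for n
      proof -
        have "mu (offs T \<inter> cyl (restr (stretch x) n)) \<le> (1/2) ^ n * (1/2) ^ ?m"
          using xF par False by (intro even_tail[OF pr xb _ _ n]) auto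
        then have "dens_ratio (offs T) (stretch x) n \<le> (1/2) ^ ?m"
          unfolding dens_ratio_eq by (simp add: field_simps)
        moreover have "0 \<le> dens_ratio (offs T) (stretch x) n" by (rule ratio_ge0)
        ultimately have "norm (dens_ratio (offs T) (stretch x) n - 0) = dens_ratio (offs T) (stretch x) n" by auto
        then show ?thesis using pm m0 \<open>dens_ratio (offs T) (stretch x) n \<le> (1/2) ^ ?m\<close> by linarith
      qed
      then show "\<exists>no. \<forall>n\<ge>no. norm (dens_ratio (offs T) (stretch x) n - 0) < r" by blast
    qed
    then show ?thesis by blast
  qed
qed


lemma limsup_one:
  fixes X :: "nat \<Rightarrow> real"
  assumes le: "\<And>n. X n \<le> 1" and fr: "\<And>e N. 0 < e \<Longrightarrow> \<exists>n\<ge>N. 1 - e < X n"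
  shows "limsup (\<lambda>n. ereal (X n)) = 1"
proof (rule antisym)
  show "limsup (\<lambda>n. ereal (X n)) \<le> 1"
    by (rule Limsup_bounded) (simp add: le)
  show "1 \<le> limsup (\<lambda>n. ereal (X n))"
    unfolding limsup_INF_SUP
  proof (rule INF_greatest)
    fix N :: nat
    show "1 \<le> (SUP n\<in>{N..}. ereal (X n))"
    proof (rule ereal_le_epsilon2)
      fix e :: real assume e: "0 < e"
      obtain n where n: "n \<ge> N" "1 - e < X n" using fr[OF e] by blast
      have "ereal (X n) \<le> (SUP n\<in>{N..}. ereal (X n))" by (rule SUP_upper) (simp add: n)
      then have "ereal (X n) + ereal e \<le> (SUP n\<in>{N..}. ereal (X n)) + ereal e" by (rule add_right_mono)
      moreover have "1 \<le> ereal (X n) + ereal e" using n by simp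
      ultimately show "1 \<le> (SUP n\<in>{N..}. ereal (X n)) + ereal e" by (rule order_trans[rotated])
    qed
  qed
qed

lemma liminf_zero:
  fixes X :: "nat \<Rightarrow> real"
  assumes ge: "\<And>n. 0 \<le> X n" and fr: "\<And>e N. 0 < e \<Longrightarrow> \<exists>n\<ge>N. X n < e"
  shows "liminf (\<lambda>n. ereal (X n)) = 0"
proof (rule antisym)
  show "0 \<le> liminf (\<lambda>n. ereal (X n))"
    by (rule Liminf_bounded) (simp add: ge)
  show "liminf (\<lambda>n. ereal (X n)) \<le> 0"
    unfolding liminf_SUP_INF
  proof (rule SUP_least)
    fix N :: nat
    show "(INF n\<in>{N..}. ereal (X n)) \<le> 0"
    proof (rule ereal_le_epsilon2)
      fix e :: real assume e: "0 < e"
      obtain n where n: "n \<ge> N" "X n < e" using fr[OF e] by blast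
      have "(INF n\<in>{N..}. ereal (X n)) \<le> ereal (X n)" by (rule INF_lower) (simp add: n)
      moreover have "ereal (X n) \<le> 0 + ereal e" using n by simp
      ultimately show "(INF n\<in>{N..}. ereal (X n)) \<le> 0 + ereal e" by (rule order_trans)
    qed
  qed
qed

lemma NN_osc:
  assumes pr: "pruned_tree T" and xb: "x \<in> branches T" and nn: "x \<in> NN"
  shows "osc (offs T) (stretch x) = 1"
proof -
  let ?X = "dens_ratio (offs T) (stretch x)"
  have inf: "infinite {n. x n}" using nn unfolding NN_def by simp
  have ex: "\<exists>k\<ge>N. x k" for N using inf unfolding infinite_nat_iff_unbounded_le by auto
  have both: "(\<exists>m\<ge>N. odd1 (restr x m)) \<and> (\<exists>m\<ge>N. \<not> odd1 (restr x m))" for N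
  proof -
    obtain k where k: "k \<ge> N" "x k" using ex by blast
    have "odd1 (restr x (Suc k)) \<longleftrightarrow> \<not> odd1 (restr x k)" using k by (simp add: odd1_Suc)
    then show ?thesis using k by (metis le_SucI)
  qed
  have lev: "?X (tri m) = mu (offs T \<inter> cyl (stretch_list (restr x m))) / (1/2) ^ tri m" for m
    unfolding dens_ratio_eq by (simp add: restr_stretch)
  have hi: "\<exists>n\<ge>N. 1 - e < ?X n" if e: "0 < e" for e N
  proof -
    obtain m0 where m0: "(1/2::real) ^ m0 < e" using real_arch_pow_inv[OF e, of "1/2"] by auto
    obtain m where m: "m \<ge> max N m0" "odd1 (restr x m)" using both by blast
    have "(1/2) ^ tri m * (1 - (1/2) ^ m) \<le> mu (offs T \<inter> cyl (stretch_list (restr x m)))"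
      using level_odd_mu[OF pr branch_restr[OF xb] m(2)] by simp
    then have a: "1 - (1/2) ^ m \<le> ?X (tri m)" unfolding lev by (simp add: field_simps)
    have b: "(1/2::real) ^ m \<le> (1/2) ^ m0" using m by (intro power_decreasing) simp_all
    have c: "N \<le> tri m" using m tri_ge[of m] by simp
    have "1 - e < ?X (tri m)" using a b m0 by linarith
    then show ?thesis using c by blast
  qed
  have lo: "\<exists>n\<ge>N. ?X n < e" if e: "0 < e" for e N
  proof -
    obtain m0 where m0: "(1/2::real) ^ m0 < e" using real_arch_pow_inv[OF e, of "1/2"] by auto
    obtain m where m: "m \<ge> max N m0" "\<not> odd1 (restr x m)" using both by blast
    have "mu (offs T \<inter> cyl (stretch_list (restr x m))) \<le> (1/2) ^ tri m * (1/2) ^ m"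
      using level_even_mu[OF pr branch_restr[OF xb] m(2)] by simp
    then have a: "?X (tri m) \<le> (1/2) ^ m" unfolding lev by (simp add: field_simps)
    have b: "(1/2::real) ^ m \<le> (1/2) ^ m0" using m by (intro power_decreasing) simp_all
    have c: "N \<le> tri m" using m tri_ge[of m] by simp
    have "?X (tri m) < e" using a b m0 by linarith
    then show ?thesis using c by blast
  qed
  have "limsup (\<lambda>n. ereal (?X n)) = 1" by (rule limsup_one[OF ratio_le1[OF pr] hi])
  moreover have "liminf (\<lambda>n. ereal (?X n)) = 0" by (rule liminf_zero[OF ratio_ge0 lo])
  ultimately show ?thesis unfolding osc_def by simp
qed


lemma topspace_PrTr2: "topspace PrTr2 = {T. pruned_tree T}"
  unfolding PrTr2_def tree_space_top_def by simp

lemma open_agree: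
  assumes F: "finite F"
  shows "openin PrTr2 {T. pruned_tree T \<and> (\<forall>s\<in>F. T s = T0 s)}"
proof -
  have "openin tree_space_top {T. \<forall>s\<in>F. T s = T0 s}"
    unfolding tree_space_top_def openin_product_topology_alt
  proof (intro ballI)
    fix T assume T: "T \<in> {T. \<forall>s\<in>F. T s = T0 s}"
    define V where "V = (\<lambda>s. if s \<in> F then {T0 s} else (UNIV::bool set))"
    have "{i. V i \<noteq> UNIV} \<subseteq> F" unfolding V_def by auto
    then have fin: "finite {i \<in> UNIV. V i \<noteq> topspace (discrete_topology UNIV)}" using F finite_subset by auto
    have "T \<in> Pi\<^sub>E UNIV V" using T unfolding V_def by (auto simp: PiE_iff)
    moreover have "Pi\<^sub>E UNIV V \<subseteq> {T. \<forall>s\<in>F. T s = T0 s}"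
    proof
      fix T' assume T': "T' \<in> Pi\<^sub>E UNIV V"
      have "T' s = T0 s" if s: "s \<in> F" for s
      proof -
        have "T' s \<in> V s" using T' by (simp add: PiE_iff)
        then show ?thesis using s unfolding V_def by simp
      qed
      then show "T' \<in> {T. \<forall>s\<in>F. T s = T0 s}" by simp
    qed
    ultimately show "\<exists>U. finite {i \<in> UNIV. U i \<noteq> topspace (discrete_topology UNIV)} \<and>
             (\<forall>i\<in>UNIV. openin (discrete_topology UNIV) (U i)) \<and> T \<in> Pi\<^sub>E UNIV U \<and> Pi\<^sub>E UNIV U \<subseteq> {T. \<forall>s\<in>F. T s = T0 s}"
      using fin by (intro exI[of _ V]) simp
  qed
  then show ?thesis unfolding PrTr2_def openin_subtopology by blast
qed

definition qpt :: "bool list \<Rightarrow> (nat \<Rightarrow> bool)" where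
  "qpt s = lconc (stretch_list s @ (True # replicate (length s) False)) p0"

lemma flag_Fl: "1 \<le> n \<Longrightarrow> True # replicate n False \<in> Fl n"
proof (rule Fl_intro)
  assume n: "1 \<le> n"
  show "length (True # replicate n False) = Suc n" by simp
  fix c show "True # replicate n False \<noteq> replicate (Suc n) c"
  proof
    assume e: "True # replicate n False = replicate (Suc n) c"
    then have "c = True" by simp
    then have "replicate n False = replicate n True" using e by simp
    then show False using n by (cases n) auto
  qed
qed

lemma qpt_offs: "T s \<Longrightarrow> 1 \<le> length s \<Longrightarrow> qpt s \<in> offs T"
  unfolding qpt_def offs_def Cset_def using flag_Fl by fastforce

lemma qpt_cyl: "qpt s \<in> cyl (stretch_list s)"
  unfolding qpt_def using lconc_in_cyl1[of "stretch_list s @ True # replicate (length s) False" p0]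
  by (simp add: cyl_append_iff)

lemma cyl_stretch_close:
  assumes "y \<in> cyl (stretch_list s)" "y' \<in> cyl (stretch_list s)"
  shows "y \<in> cyl (restr y' (length s))"
proof -
  have "length s \<le> tri (length s)" by (rule tri_ge)
  then have "\<forall>i<length s. y i = y' i" using assms unfolding cyl_iff by auto
  then show ?thesis by (simp add: cyl_restr_iff)
qed

lemma cyl_stretch_take:
  assumes "y \<in> cyl (stretch_list t)" "N \<le> length t"
  shows "y \<in> cyl (stretch_list (take N t))"
proof -
  have "stretch_list (take N t) = take (tri N) (stretch_list t)" using assms(2) by (rule stretch_list_take)
  then show ?thesis using assms(1) unfolding cyl_iff by auto
qed

lemma cyl_restr_le: "z \<in> cyl (restr y n) \<Longrightarrow> k \<le> n \<Longrightarrow> z \<in> cyl (restr y k)"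
  unfolding cyl_restr_iff by auto

lemma cyl_restr_sym: "z \<in> cyl (restr y n) \<Longrightarrow> cyl (restr z n) = cyl (restr y n)"
  unfolding set_eq_iff cyl_restr_iff by auto

lemma lebesgue_number:
  assumes K: "compactin cantor_top K" and U: "openin cantor_top U" and KU: "K \<subseteq> U"
  shows "\<exists>N. \<forall>y\<in>K. cyl (restr y N) \<subseteq> U"
proof -
  let ?C = "{cyl (restr y k) | y k. cyl (restr y k) \<subseteq> U}"
  have op: "\<forall>V\<in>?C. openin cantor_top V"
  proof
    fix V assume "V \<in> ?C"
    then obtain y k where V: "V = cyl (restr y k)" by blast
    show "openin cantor_top V" unfolding openin_cantor_iff V
      using cyl_restr_sym by blast
  qed
  have cov: "K \<subseteq> \<Union>?C"
  proof
    fix y assume "y \<in> K"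
    moreover have "\<forall>y\<in>U. \<exists>n. cyl (restr y n) \<subseteq> U" using U by (simp only: openin_cantor_iff)
    ultimately obtain k where "cyl (restr y k) \<subseteq> U" using KU by blast
    then show "y \<in> \<Union>?C" using in_cyl_restr_self[of y k] by blast
  qed
  obtain F where F: "finite F" "F \<subseteq> ?C" "K \<subseteq> \<Union>F"
    using K op cov unfolding compactin_def by meson
  have "\<forall>V\<in>F. \<exists>k. (\<forall>z\<in>V. cyl (restr z k) \<subseteq> V) \<and> V \<subseteq> U"
  proof
    fix V assume "V \<in> F"
    then obtain y k where V: "V = cyl (restr y k)" "cyl (restr y k) \<subseteq> U" using F(2) by blast
    show "\<exists>k. (\<forall>z\<in>V. cyl (restr z k) \<subseteq> V) \<and> V \<subseteq> U"
      using V cyl_restr_sym by (intro exI[of _ k]) blast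
  qed
  then obtain kf where kf: "\<And>V. V \<in> F \<Longrightarrow> (\<forall>z\<in>V. cyl (restr z (kf V)) \<subseteq> V) \<and> V \<subseteq> U" by metis
  obtain N where N: "kf ` F \<subseteq> {..<N}" using finite_nat_bounded[OF finite_imageI[OF F(1)]] by blast
  have "cyl (restr y N) \<subseteq> U" if y: "y \<in> K" for y
  proof -
    obtain V where V: "V \<in> F" "y \<in> V" using F(3) y by blast
    have "kf V \<le> N" using N V(1) by auto
    then have "cyl (restr y N) \<subseteq> cyl (restr y (kf V))" using cyl_restr_le by blast
    also have "\<dots> \<subseteq> V" using kf[OF V(1)] V(2) by blast
    also have "\<dots> \<subseteq> U" using kf[OF V(1)] by blast
    finally show ?thesis .
  qed
  then show ?thesis by blast
qed

lemma lower_open: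
  assumes U: "openin cantor_top U"
  shows "openin PrTr2 {T \<in> topspace PrTr2. offs T \<inter> U \<noteq> {}}"
proof (rule openin_subopen[THEN iffD2], intro ballI)
  fix T0 assume T0: "T0 \<in> {T \<in> topspace PrTr2. offs T \<inter> U \<noteq> {}}"
  then have pr0: "pruned_tree T0" by (simp add: topspace_PrTr2)
  obtain y where y: "y \<in> offs T0" "y \<in> U" using T0 by blast
  have "\<forall>y\<in>U. \<exists>n. cyl (restr y n) \<subseteq> U" using U by (simp only: openin_cantor_iff)
  then obtain n0 where n0: "cyl (restr y n0) \<subseteq> U" using y(2) by blast
  define n where "n = Suc n0"
  have "cyl (restr y n) \<subseteq> cyl (restr y n0)"
  proof
    fix z assume "z \<in> cyl (restr y n)" then show "z \<in> cyl (restr y n0)" by (rule cyl_restr_le) (simp add: n_def)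
  qed
  then have n: "cyl (restr y n) \<subseteq> U" "1 \<le> n" using n0 unfolding n_def by auto
  have "\<exists>s. T0 s \<and> (\<forall>T. pruned_tree T \<longrightarrow> T s \<longrightarrow> offs T \<inter> U \<noteq> {})"
    using y(1)
  proof (cases rule: offs_in_cyl_cases)
    case (br x)
    let ?s = "restr x n"
    have "\<forall>T. pruned_tree T \<longrightarrow> T ?s \<longrightarrow> offs T \<inter> U \<noteq> {}"
    proof (intro allI impI)
      fix T assume "pruned_tree T" "T ?s"
      then have q: "qpt ?s \<in> offs T" using n by (intro qpt_offs) simp_all
      have "qpt ?s \<in> cyl (restr y (length ?s))"
        using cyl_stretch_close[OF qpt_cyl stretch_in_cyl[of x n]] br by simp
      then show "offs T \<inter> U \<noteq> {}" using q n by auto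
    qed
    then show ?thesis using branch_restr[OF br(1)] by blast
  next
    case (pc t a z)
    have "\<forall>T. pruned_tree T \<longrightarrow> T t \<longrightarrow> offs T \<inter> U \<noteq> {}"
    proof (intro allI impI)
      fix T assume "pruned_tree T" "T t"
      then have "y \<in> offs T" unfolding offs_def using pc by blast
      then show "offs T \<inter> U \<noteq> {}" using y by blast
    qed
    then show ?thesis using pc by blast
  qed
  then obtain s where s: "T0 s" "\<forall>T. pruned_tree T \<longrightarrow> T s \<longrightarrow> offs T \<inter> U \<noteq> {}" by blast
  let ?W = "{T. pruned_tree T \<and> (\<forall>s'\<in>{s}. T s' = T0 s')}"
  have "openin PrTr2 ?W" by (rule open_agree) simp
  moreover have "T0 \<in> ?W" using pr0 by simp
  moreover have "?W \<subseteq> {T \<in> topspace PrTr2. offs T \<inter> U \<noteq> {}}" using s by (auto simp: topspace_PrTr2)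
  ultimately show "\<exists>W. openin PrTr2 W \<and> T0 \<in> W \<and> W \<subseteq> {T \<in> topspace PrTr2. offs T \<inter> U \<noteq> {}}" by blast
qed

lemma upper_open:
  assumes U: "openin cantor_top U"
  shows "openin PrTr2 {T \<in> topspace PrTr2. offs T \<subseteq> U}"
proof (rule openin_subopen[THEN iffD2], intro ballI)
  fix T0 assume T0: "T0 \<in> {T \<in> topspace PrTr2. offs T \<subseteq> U}"
  then have pr0: "pruned_tree T0" and sub0: "offs T0 \<subseteq> U" by (simp_all add: topspace_PrTr2)
  obtain N0 where N0: "\<forall>y\<in>offs T0. cyl (restr y N0) \<subseteq> U"
    using lebesgue_number[OF compact_offs[OF pr0] U sub0] by blast
  define N where "N = Suc N0"
  have N1: "cyl (restr y N) \<subseteq> U" if "y \<in> offs T0" for y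
  proof
    fix z assume "z \<in> cyl (restr y N)"
    then have "z \<in> cyl (restr y N0)" by (rule cyl_restr_le) (simp add: N_def)
    then show "z \<in> U" using N0 that by blast
  qed
  have N: "\<forall>y\<in>offs T0. cyl (restr y N) \<subseteq> U" "1 \<le> N" using N1 unfolding N_def by auto
  let ?F = "{s::bool list. set s \<subseteq> UNIV \<and> length s \<le> N}"
  have finF: "finite ?F" by (rule finite_lists_length_le) simp
  let ?W = "{T. pruned_tree T \<and> (\<forall>s\<in>?F. T s = T0 s)}"
  have "openin PrTr2 ?W" by (rule open_agree[OF finF])
  moreover have "T0 \<in> ?W" using pr0 by simp
  moreover have "?W \<subseteq> {T \<in> topspace PrTr2. offs T \<subseteq> U}"
  proof
    fix T assume T: "T \<in> ?W"
    then have pr: "pruned_tree T" and ag: "\<And>s. length s \<le> N \<Longrightarrow> T s = T0 s" by auto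
    have key: "y \<in> U" if s: "T s" "length s = N" "y \<in> cyl (stretch_list s)" for s y
    proof -
      have "qpt s \<in> offs T0" using s N ag[of s] by (intro qpt_offs) simp_all
      moreover have "y \<in> cyl (restr (qpt s) N)" using cyl_stretch_close[OF s(3) qpt_cyl] s(2) by simp
      ultimately show ?thesis using N by blast
    qed
    have "offs T \<subseteq> U"
    proof
      fix y assume "y \<in> offs T"
      then show "y \<in> U"
      proof (cases rule: offs_in_cyl_cases)
        case (br x)
        show ?thesis using key[of "restr x N" y] branch_restr[OF br(1)] br stretch_in_cyl by simp
      next
        case (pc t a z)
        show ?thesis
        proof (cases "length t \<le> N")
          case True
          then have "T0 t" using ag pc(1) by simp
          then have "y \<in> offs T0" unfolding offs_def using pc by blast
          then show ?thesis using sub0 by blast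
        next
          case False
          have "y \<in> cyl (stretch_list t)" using pc(5) by (simp add: cyl_append_iff)
          then have "y \<in> cyl (stretch_list (take N t))" using False by (intro cyl_stretch_take) simp_all
          moreover have "T (take N t)" by (rule pruned_take[OF pr pc(1)])
          ultimately show ?thesis using key[of "take N t" y] False by simp
        qed
      qed
    qed
    then show "T \<in> {T \<in> topspace PrTr2. offs T \<subseteq> U}" using pr by (simp add: topspace_PrTr2)
  qed
  ultimately show "\<exists>W. openin PrTr2 W \<and> T0 \<in> W \<and> W \<subseteq> {T \<in> topspace PrTr2. offs T \<subseteq> U}" by blast
qed

lemma continuous_offs: "continuous_map PrTr2 vietoris offs"
  unfolding vietoris_def continuous_map_in_subtopology
proof
  let ?S = "{{K. K \<subseteq> U} | U. openin cantor_top U} \<union> {{K. K \<inter> U \<noteq> {}} | U. openin cantor_top U}"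
  show "continuous_map PrTr2 (topology_generated_by ?S) offs"
  proof (rule continuous_on_generated_topo)
    fix V assume "V \<in> ?S"
    then consider (up) U where "openin cantor_top U" "V = {K. K \<subseteq> U}"
      | (lo) U where "openin cantor_top U" "V = {K. K \<inter> U \<noteq> {}}" by (elim UnE CollectE exE conjE) blast+
    then show "openin PrTr2 (offs -` V \<inter> topspace PrTr2)"
    proof cases
      case up
      have "offs -` V \<inter> topspace PrTr2 = {T \<in> topspace PrTr2. offs T \<subseteq> U}" using up(2) by blast
      then show ?thesis using upper_open[OF up(1)] by simp
    next
      case lo
      have "offs -` V \<inter> topspace PrTr2 = {T \<in> topspace PrTr2. offs T \<inter> U \<noteq> {}}" using lo(2) by blast
      then show ?thesis using lower_open[OF lo(1)] by simp
    qed
  next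
    have "openin cantor_top UNIV" using openin_topspace[of cantor_top] by simp
    then have u: "{K. K \<subseteq> UNIV} \<in> ?S" by (intro UnI1 CollectI exI[of _ UNIV]) simp
    show "offs ` topspace PrTr2 \<subseteq> \<Union> ?S"
    proof
      fix K assume "K \<in> offs ` topspace PrTr2"
      show "K \<in> \<Union> ?S" by (rule UnionI[OF u]) simp
    qed
  qed
  show "offs \<in> topspace PrTr2 \<rightarrow> {K. compactin cantor_top K}"
  proof
    fix T assume "T \<in> topspace PrTr2"
    then have "pruned_tree T" by (simp add: topspace_PrTr2)
    then show "offs T \<in> {K. compactin cantor_top K}" using compact_offs by simp
  qed
qed


theorem theorem4p2:
  shows "\<exists>G. continuous_map PrTr2 vietoris G \<and>
    (\<forall>T. pruned_tree T \<longrightarrow>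
       (\<exists>D. compliant T D \<and> G T = closed_offspring T D) \<and>
       (\<forall>x\<in>branches T.
          (x \<in> NN \<longrightarrow> osc (G T) (stretch x) = 1) \<and>
          (x \<notin> NN \<longrightarrow> (\<exists>d\<in>{0,1}. density_is (G T) (stretch x) d))))"
proof (intro exI[of _ offs] conjI allI impI ballI)
  show "continuous_map PrTr2 vietoris offs" by (rule continuous_offs)
next
  fix T assume "pruned_tree T"
  show "\<exists>D. compliant T D \<and> offs T = closed_offspring T D"
    using compliant_Dset offs_eq by metis
next
  fix T x assume "pruned_tree T" "x \<in> branches T" "x \<in> NN"
  then show "osc (offs T) (stretch x) = 1" by (rule NN_osc)
next
  fix T x assume "pruned_tree T" "x \<in> branches T" "x \<notin> NN"
  then show "\<exists>d\<in>{0,1}. density_is (offs T) (stretch x) d" by (rule nonNN_density)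
qed

end
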